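(* Let $X,Y,A,B$ be non-empty finite sets. Then $\mathsf{QC}(\mathcal R_{\rm loc})=\mathcal Q_{\rm loc}$.
   Context: For a block operator isometry $W=(W_{c,z})_{c\in C,z\in Z}:H^Z\to K^C$ (entries $W_{c,z}\in\mathcal B(H,K)$) and a normal state $\sigma$ on $\mathcal B(H)$, $\Gamma_{W,\sigma}:M_Z\to M_C$ is the channel $\Gamma_{W,\sigma}(\epsilon_{z,z'})=\sum_{c,c'}\sigma(W_{c,z}^*W_{c',z'})\epsilon_{c,c'}$; for a family $\mathcal R$, $\mathsf{QC}(\mathcal R)=\{\Gamma_{W,\sigma}:W\in\mathcal R,\sigma\text{ normal state}\}$. An isometry $U:\mathbb C^X\to\mathbb C^A\otimes\mathbb C^S$ ($S$ finite) is regarded as a block operator isometry over $(X,A)$ with entries $U_{a,x}\in\mathcal B(\mathbb C,\mathbb C^S)$ determined by $Ue_x=\sum_a e_a\otimes U_{a,x}$; similarly $V:\mathbb C^Y\to\mathbb C^B\otimes\mathbb C^T$. Then $U\otimes V$ is the block operator isometry over $(X\times Y,A\times B)$ with entries $U_{a,x}\otimes V_{b,y}$. $\mathcal R_{\rm loc}$ is the set of all finite direct sums (entrywise) of such $U\otimes V$, over all finite sets $S,T$ and all isometries $U,V$. $\mathcal Q_{\rm loc}$ is the set of convex combinations $\sum_i\lambda_i\Phi_i\otimes\Psi_i$, where $\Phi_i:M_X\to M_A$ and $\Psi_i:M_Y\to M_B$ are quantum channels (completely positive trace preserving maps). *)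

theory Defs
  imports Complex_Main
begin

definition matunit :: "'i \<Rightarrow> 'i \<Rightarrow> ('i \<Rightarrow> 'i \<Rightarrow> complex)" where
  "matunit x x' = (\<lambda>i j. if i = x \<and> j = x' then 1 else 0)"

definition psd_on :: "'i set \<Rightarrow> ('i \<Rightarrow> 'i \<Rightarrow> complex) \<Rightarrow> bool" where
  "psd_on I M \<longleftrightarrow> (\<forall>v :: 'i \<Rightarrow> complex.
     (\<Sum>i\<in>I. \<Sum>j\<in>I. cnj (v i) * M i j * v j) \<in> \<real> \<and>
     0 \<le> Re (\<Sum>i\<in>I. \<Sum>j\<in>I. cnj (v i) * M i j * v j))"

definition lin_map :: "(('x \<Rightarrow> 'x \<Rightarrow> complex) \<Rightarrow> ('a \<Rightarrow> 'a \<Rightarrow> complex)) \<Rightarrow> bool" where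
  "lin_map \<Phi> \<longleftrightarrow> (\<forall>M N. \<Phi> (\<lambda>i j. M i j + N i j) = (\<lambda>i j. \<Phi> M i j + \<Phi> N i j)) \<and>
                   (\<forall>c M. \<Phi> (\<lambda>i j. c * M i j) = (\<lambda>i j. c * \<Phi> M i j))"

text \<open>Amplification \<Phi> \<otimes> id_{M_n}, block indices k < n.\<close>
definition ampl :: "(('x \<Rightarrow> 'x \<Rightarrow> complex) \<Rightarrow> ('a \<Rightarrow> 'a \<Rightarrow> complex))
    \<Rightarrow> ('x \<times> nat \<Rightarrow> 'x \<times> nat \<Rightarrow> complex) \<Rightarrow> ('a \<times> nat \<Rightarrow> 'a \<times> nat \<Rightarrow> complex)" where
  "ampl \<Phi> M = (\<lambda>(a, k) (a', k'). \<Phi> (\<lambda>x x'. M (x, k) (x', k')) a a')"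

definition compl_pos :: "(('x::finite \<Rightarrow> 'x \<Rightarrow> complex) \<Rightarrow> ('a::finite \<Rightarrow> 'a \<Rightarrow> complex)) \<Rightarrow> bool" where
  "compl_pos \<Phi> \<longleftrightarrow> (\<forall>n::nat. \<forall>M. psd_on (UNIV \<times> {..<n}) M \<longrightarrow>
       psd_on (UNIV \<times> {..<n}) (ampl \<Phi> M))"

definition trace_pres :: "(('x::finite \<Rightarrow> 'x \<Rightarrow> complex) \<Rightarrow> ('a::finite \<Rightarrow> 'a \<Rightarrow> complex)) \<Rightarrow> bool" where
  "trace_pres \<Phi> \<longleftrightarrow> (\<forall>M. (\<Sum>a\<in>UNIV. \<Phi> M a a) = (\<Sum>x\<in>UNIV. M x x))"

definition quantum_channel :: "(('x::finite \<Rightarrow> 'x \<Rightarrow> complex) \<Rightarrow> ('a::finite \<Rightarrow> 'a \<Rightarrow> complex)) \<Rightarrow> bool" where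
  "quantum_channel \<Phi> \<longleftrightarrow> lin_map \<Phi> \<and> compl_pos \<Phi> \<and> trace_pres \<Phi>"

text \<open>Tensor product of maps, defined on product matrix units and extended linearly.\<close>
definition map_tensor ::
  "(('x::finite \<Rightarrow> 'x \<Rightarrow> complex) \<Rightarrow> ('a \<Rightarrow> 'a \<Rightarrow> complex))
   \<Rightarrow> (('y::finite \<Rightarrow> 'y \<Rightarrow> complex) \<Rightarrow> ('b \<Rightarrow> 'b \<Rightarrow> complex))
   \<Rightarrow> ('x \<times> 'y \<Rightarrow> 'x \<times> 'y \<Rightarrow> complex) \<Rightarrow> ('a \<times> 'b \<Rightarrow> 'a \<times> 'b \<Rightarrow> complex)" where
  "map_tensor \<Phi> \<Psi> M = (\<lambda>(a, b) (a', b').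
     \<Sum>x\<in>UNIV. \<Sum>x'\<in>UNIV. \<Sum>y\<in>UNIV. \<Sum>y'\<in>UNIV.
       M (x, y) (x', y') * \<Phi> (matunit x x') a a' * \<Psi> (matunit y y') b b')"

definition Q_loc ::
  "(('x::finite \<times> 'y::finite \<Rightarrow> 'x \<times> 'y \<Rightarrow> complex) \<Rightarrow> ('a::finite \<times> 'b::finite \<Rightarrow> 'a \<times> 'b \<Rightarrow> complex)) set" where
  "Q_loc = {\<Gamma>. \<exists>(n::nat) (w::nat \<Rightarrow> real) \<Phi> \<Psi>.
      (\<forall>i<n. 0 \<le> w i \<and> quantum_channel (\<Phi> i) \<and> quantum_channel (\<Psi> i)) \<and>
      (\<Sum>i<n. w i) = 1 \<and>
      \<Gamma> = (\<lambda>M c c'. \<Sum>i<n. complex_of_real (w i) * map_tensor (\<Phi> i) (\<Psi> i) M c c')}"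

text \<open>Block operator W = (W_{c,z}) with W_{c,z} in B(C^H, C^K), stored as K x H matrices
  (W c z k h). A normal state on B(C^H) (H finite) is sigma(N) = tr(rho N) for a density matrix rho.
  Gamma_{W,sigma}(eps_{z,z'}) = sum_{c,c'} sigma(W_{c,z}^* W_{c',z'}) eps_{c,c'}, extended linearly.\<close>
definition gammaW :: "'k set \<Rightarrow> 'h set \<Rightarrow> ('c \<Rightarrow> 'z::finite \<Rightarrow> 'k \<Rightarrow> 'h \<Rightarrow> complex)
    \<Rightarrow> ('h \<Rightarrow> 'h \<Rightarrow> complex) \<Rightarrow> ('z \<Rightarrow> 'z \<Rightarrow> complex) \<Rightarrow> ('c \<Rightarrow> 'c \<Rightarrow> complex)" where
  "gammaW K H W \<rho> M = (\<lambda>c c'. \<Sum>z\<in>UNIV. \<Sum>z'\<in>UNIV. M z z' *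
      (\<Sum>h\<in>H. \<Sum>h'\<in>H. \<rho> h h' * (\<Sum>k\<in>K. cnj (W c z k h') * W c' z' k h)))"

definition density_on :: "'h set \<Rightarrow> ('h \<Rightarrow> 'h \<Rightarrow> complex) \<Rightarrow> bool" where
  "density_on H \<rho> \<longleftrightarrow> psd_on H \<rho> \<and> (\<Sum>h\<in>H. \<rho> h h) = 1"

text \<open>Isometry U : C^X \<rightarrow> C^A \<otimes> C^S, U e_x = sum_a e_a \<otimes> (sum_{s in S} u a s x e_s).\<close>
definition isometry_on :: "nat set \<Rightarrow> ('a::finite \<Rightarrow> nat \<Rightarrow> 'x::finite \<Rightarrow> complex) \<Rightarrow> bool" where
  "isometry_on S u \<longleftrightarrow> (\<forall>x x'. (\<Sum>a\<in>UNIV. \<Sum>s\<in>S. cnj (u a s x) * u a s x') =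
       (if x = x' then 1 else 0))"

text \<open>Direct sum over i < n of U_i \<otimes> V_i: H = C^{n}, K = \<oplus>_i C^{S_i} \<otimes> C^{T_i}.\<close>
definition dsum_K :: "nat \<Rightarrow> (nat \<Rightarrow> nat set) \<Rightarrow> (nat \<Rightarrow> nat set) \<Rightarrow> (nat \<times> nat \<times> nat) set" where
  "dsum_K n S T = {(i, s, t). i < n \<and> s \<in> S i \<and> t \<in> T i}"

definition dsum_W :: "(nat \<Rightarrow> 'a \<Rightarrow> nat \<Rightarrow> 'x \<Rightarrow> complex) \<Rightarrow> (nat \<Rightarrow> 'b \<Rightarrow> nat \<Rightarrow> 'y \<Rightarrow> complex)
    \<Rightarrow> ('a \<times> 'b) \<Rightarrow> ('x \<times> 'y) \<Rightarrow> (nat \<times> nat \<times> nat) \<Rightarrow> nat \<Rightarrow> complex" where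
  "dsum_W u v = (\<lambda>(a, b) (x, y) (i, s, t) j.
      if i = j then u i a s x * v i b t y else 0)"

definition QC_Rloc ::
  "(('x::finite \<times> 'y::finite \<Rightarrow> 'x \<times> 'y \<Rightarrow> complex) \<Rightarrow> ('a::finite \<times> 'b::finite \<Rightarrow> 'a \<times> 'b \<Rightarrow> complex)) set" where
  "QC_Rloc = {gammaW (dsum_K n S T) {..<n} (dsum_W u v) \<rho> | n S T u v \<rho>.
      (\<forall>i<n. finite (S i) \<and> finite (T i) \<and> isometry_on (S i) (u i) \<and> isometry_on (T i) (v i))
      \<and> density_on {..<n} \<rho>}"

end

theory Submission
  imports Defs
begin


lemma sum_two:
  assumes "finite I" "p \<in> I" "q \<in> I" "p \<noteq> q" "\<forall>i\<in>I. i \<noteq> p \<and> i \<noteq> q \<longrightarrow> g i = 0"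
  shows "sum g I = g p + g q"
proof -
  have "sum g I = sum g {p,q}"
    by (rule sum.mono_neutral_right) (use assms in auto)
  then show ?thesis using assms by simp
qed

lemma qf_two:
  assumes "finite I" "p \<in> I" "q \<in> I" "p \<noteq> q"
  shows "(\<Sum>i\<in>I. \<Sum>j\<in>I. cnj ((\<lambda>j. if j = p then \<alpha> else if j = q then \<beta> else 0) i) * C i j *
            (\<lambda>j. if j = p then \<alpha> else if j = q then \<beta> else 0) j)
       = cnj \<alpha> * C p p * \<alpha> + cnj \<alpha> * C p q * \<beta> + cnj \<beta> * C q p * \<alpha> + cnj \<beta> * C q q * \<beta>"
  using assms by (simp add: sum_two[OF assms])

lemma sum_one:
  assumes "finite I" "p \<in> I" "\<forall>i\<in>I. i \<noteq> p \<longrightarrow> g i = 0"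
  shows "sum g I = g p"
proof -
  have "sum g I = sum g {p}"
    by (rule sum.mono_neutral_right) (use assms in auto)
  then show ?thesis using assms by simp
qed

lemma qf_one:
  assumes "finite I" "p \<in> I"
  shows "(\<Sum>i\<in>I. \<Sum>j\<in>I. cnj ((\<lambda>j. if j = p then \<alpha> else 0) i) * C i j *
            (\<lambda>j. if j = p then \<alpha> else 0) j) = cnj \<alpha> * C p p * \<alpha>"
  using assms by (simp add: sum_one[OF assms])

lemma psd_diag:
  assumes "finite I" "psd_on I C" "p \<in> I"
  shows "C p p \<in> \<real>" "0 \<le> Re (C p p)"
proof -
  have e: "(\<Sum>i\<in>I. \<Sum>j\<in>I. cnj ((\<lambda>j. if j = p then 1 else 0) i) * C i j *
            (\<lambda>j. if j = p then 1 else 0) j) = C p p"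
    using qf_one[OF assms(1,3), of 1 C] by simp
  have "(\<Sum>i\<in>I. \<Sum>j\<in>I. cnj ((\<lambda>j. if j = p then 1 else 0) i) * C i j *
            (\<lambda>j. if j = p then 1 else 0) j) \<in> \<real> \<and> 0 \<le> Re (\<Sum>i\<in>I. \<Sum>j\<in>I. cnj ((\<lambda>j. if j = p then 1 else 0) i) * C i j *
            (\<lambda>j. if j = p then (1::complex) else 0) j)"
    using assms(2) unfolding psd_on_def by (rule spec)
  then show "C p p \<in> \<real>" "0 \<le> Re (C p p)" unfolding e by auto
qed

lemma psd_qf:
  assumes "psd_on I C"
  shows "(\<Sum>i\<in>I. \<Sum>j\<in>I. cnj (v i) * C i j * v j) \<in> \<real>"
        "0 \<le> Re (\<Sum>i\<in>I. \<Sum>j\<in>I. cnj (v i) * C i j * v j)"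
  using assms unfolding psd_on_def by blast+

lemma psd_herm:
  assumes "finite I" "psd_on I C" "p \<in> I" "q \<in> I"
  shows "C p q = cnj (C q p)"
proof (cases "p = q")
  case True
  then show ?thesis using psd_diag[OF assms(1,2,3)] by (simp add: Reals_cnj_iff)
next
  case False
  have r1: "C p p + C p q + C q p + C q q \<in> \<real>"
    using psd_qf(1)[OF assms(2), of "\<lambda>j. if j = p then 1 else if j = q then 1 else 0"]
    unfolding qf_two[OF assms(1,3,4) False] by simp
  have r2: "C p p + \<i> * C p q - \<i> * C q p + C q q \<in> \<real>"
    using psd_qf(1)[OF assms(2), of "\<lambda>j. if j = p then 1 else if j = q then \<i> else 0"]
    unfolding qf_two[OF assms(1,3,4) False] by (simp add: algebra_simps)
  have d: "Im (C p p) = 0" "Im (C q q) = 0"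
    using psd_diag(1)[OF assms(1,2,3)] psd_diag(1)[OF assms(1,2,4)] by (simp_all add: complex_is_Real_iff)
  have "Im (C p q) + Im (C q p) = 0" using r1 d by (simp add: complex_is_Real_iff)
  moreover have "Re (C p q) - Re (C q p) = 0" using r2 d by (simp add: complex_is_Real_iff)
  ultimately show ?thesis by (simp add: complex_eq_iff)
qed

lemma psd_zero_row:
  assumes "finite I" "psd_on I C" "p \<in> I" "q \<in> I" "C p p = 0"
  shows "C p q = 0"
proof (rule ccontr)
  assume nz: "C p q \<noteq> 0"
  then have pq: "p \<noteq> q" using assms(5) by auto
  define z where "z = C p q"
  define n where "n = (cmod z)^2"
  have npos: "n > 0" using nz by (simp add: n_def z_def)
  define t where "t = (Re (C q q) + 1) / (2 * n)"
  define \<alpha> where "\<alpha> = - complex_of_real t * z"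
  have h: "C q p = cnj z" using psd_herm[OF assms(1,2,4,3)] by (simp add: z_def)
  have zz: "cnj z * z = complex_of_real n" unfolding n_def
    by (simp add: complex_norm_square[symmetric] mult.commute)
  have "0 \<le> Re (cnj \<alpha> * C p p * \<alpha> + cnj \<alpha> * C p q * 1 + cnj 1 * C q p * \<alpha> + cnj 1 * C q q * 1)"
    using psd_qf(2)[OF assms(2), of "\<lambda>j. if j = p then \<alpha> else if j = q then 1 else 0"]
    unfolding qf_two[OF assms(1,3,4) pq] .
  also have "cnj \<alpha> * C p p * \<alpha> + cnj \<alpha> * C p q * 1 + cnj 1 * C q p * \<alpha> + cnj 1 * C q q * 1
     = C q q - 2 * complex_of_real t * (cnj z * z)"
    using assms(5) h by (simp add: \<alpha>_def z_def algebra_simps)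
  also have "Re \<dots> = Re (C q q) - 2 * t * n" unfolding zz by simp
  also have "\<dots> = -1" using npos by (simp add: t_def field_simps)
  finally show False by simp
qed

lemma gram:
  assumes "finite I" "psd_on I C"
  shows "\<exists>(m::nat) g. \<forall>p\<in>I. \<forall>q\<in>I. C p q = (\<Sum>s<m. cnj (g s p) * g s q)"
  using assms
proof (induction I arbitrary: C rule: finite_induct)
  case empty
  then show ?case by auto
next
  case (insert i I C)
  let ?J = "insert i I"
  have fJ: "finite ?J" using insert by simp
  define c where "c = C i i"
  define d where "d = Re c"
  have creal: "c = complex_of_real d"
    using psd_diag(1)[OF fJ insert.prems] by (simp add: c_def d_def complex_is_Real_iff complex_eq_iff)
  have dge: "d \<ge> 0" using psd_diag(2)[OF fJ insert.prems] by (simp add: c_def d_def)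
  have herm: "\<And>p q. p\<in>?J \<Longrightarrow> q\<in>?J \<Longrightarrow> C p q = cnj (C q p)"
    using psd_herm[OF fJ insert.prems] by blast
  define C' where "C' = (\<lambda>p q. C p q - C p i * C i q / c)"
  have psd': "psd_on I C'"
    unfolding psd_on_def
  proof
    fix v :: "'a \<Rightarrow> complex"
    define Q where "Q = (\<Sum>a\<in>I. \<Sum>b\<in>I. cnj (v a) * C a b * v b)"
    define L where "L = (\<Sum>b\<in>I. C i b * v b)"
    define t where "t = - L / c"
    define v' where "v' = (\<lambda>j. if j = i then t else v j)"
    have Lc: "(\<Sum>a\<in>I. cnj (v a) * C a i) = cnj L"
      unfolding L_def cnj_sum
    proof (rule sum.cong)
      fix b assume "b \<in> I"
      then have "C b i = cnj (C i b)" using herm by blast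
      then show "cnj (v b) * C b i = cnj (C i b * v b)" by simp
    qed simp
    have f_i: "(\<Sum>b\<in>?J. cnj (v' i) * C i b * v' b) = cnj t * c * t + cnj t * L"
    proof -
      have "(\<Sum>b\<in>?J. cnj (v' i) * C i b * v' b) = cnj t * c * t + (\<Sum>b\<in>I. cnj t * (C i b * v b))"
        using insert.hyps by (simp add: v'_def c_def mult.assoc) (rule sum.cong, auto)
      then show ?thesis by (simp add: L_def sum_distrib_left)
    qed
    have f_a: "(\<Sum>a\<in>I. \<Sum>b\<in>?J. cnj (v' a) * C a b * v' b) = (\<Sum>a\<in>I. cnj (v a) * C a i) * t + Q"
    proof -
      have "(\<Sum>a\<in>I. \<Sum>b\<in>?J. cnj (v' a) * C a b * v' b)
          = (\<Sum>a\<in>I. cnj (v a) * C a i * t + (\<Sum>b\<in>I. cnj (v a) * C a b * v b))"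
      proof (rule sum.cong)
        fix a assume a: "a \<in> I"
        then have "a \<noteq> i" using insert.hyps by auto
        then show "(\<Sum>b\<in>?J. cnj (v' a) * C a b * v' b) = cnj (v a) * C a i * t + (\<Sum>b\<in>I. cnj (v a) * C a b * v b)"
          using insert.hyps by (simp add: v'_def) (rule sum.cong, auto)
      qed simp
      then show ?thesis by (simp add: Q_def sum.distrib sum_distrib_right)
    qed
    have e1: "(\<Sum>a\<in>?J. \<Sum>b\<in>?J. cnj (v' a) * C a b * v' b) = cnj t * c * t + cnj t * L + cnj L * t + Q"
      using insert.hyps f_i f_a Lc by simp
    have e2: "(\<Sum>a\<in>I. \<Sum>b\<in>I. cnj (v a) * C' a b * v b) = Q - cnj L * L / c"
    proof -
      have "(\<Sum>a\<in>I. \<Sum>b\<in>I. cnj (v a) * C' a b * v b)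
          = (\<Sum>a\<in>I. \<Sum>b\<in>I. cnj (v a) * C a b * v b - (cnj (v a) * C a i) * (C i b * v b) / c)"
        unfolding C'_def by (simp add: algebra_simps)
      also have "\<dots> = Q - (\<Sum>a\<in>I. \<Sum>b\<in>I. (cnj (v a) * C a i) * (C i b * v b)) / c"
        by (simp add: Q_def sum_subtractf sum_divide_distrib)
      also have "(\<Sum>a\<in>I. \<Sum>b\<in>I. (cnj (v a) * C a i) * (C i b * v b)) = (\<Sum>a\<in>I. cnj (v a) * C a i) * L"
        unfolding L_def by (simp add: sum_product)
      also have "\<dots> = cnj L * L" by (simp only: Lc)
      finally show ?thesis .
    qed
    have e3: "cnj t * c * t + cnj t * L + cnj L * t = - cnj L * L / c"
    proof (cases "c = 0")
      case True
      then show ?thesis by (simp add: t_def)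
    next
      case False
      have cc: "cnj c = c" using creal by simp
      have ct: "cnj t = - cnj L / c" unfolding t_def by (simp add: cc)
      show ?thesis unfolding ct unfolding t_def using False
        by (simp add: divide_simps)
    qed
    have "(\<Sum>a\<in>I. \<Sum>b\<in>I. cnj (v a) * C' a b * v b) = (\<Sum>a\<in>?J. \<Sum>b\<in>?J. cnj (v' a) * C a b * v' b)"
      using e1 e2 e3 by simp
    then show "(\<Sum>a\<in>I. \<Sum>b\<in>I. cnj (v a) * C' a b * v b) \<in> \<real> \<and>
          0 \<le> Re (\<Sum>a\<in>I. \<Sum>b\<in>I. cnj (v a) * C' a b * v b)"
      using psd_qf[OF insert.prems, of v'] by simp
  qed
  obtain m :: nat and g where g: "\<forall>p\<in>I. \<forall>q\<in>I. C' p q = (\<Sum>s<m. cnj (g s p) * g s q)"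
    using insert.IH[OF psd'] by blast
  define r where "r = (\<lambda>q. C i q / complex_of_real (sqrt d))"
  define g' where "g' = (\<lambda>s p. if s < m then (if p = i then 0 else g s p) else r p)"
  have split: "(\<Sum>s<Suc m. cnj (g' s p) * g' s q) = (\<Sum>s<m. cnj (g' s p) * g' s q) + cnj (r p) * r q" for p q
    by (simp add: g'_def)
  have low: "(\<Sum>s<m. cnj (g' s p) * g' s q) = (if p = i \<or> q = i then 0 else \<Sum>s<m. cnj (g s p) * g s q)" for p q
    by (simp add: g'_def)
  have main: "C p q = (\<Sum>s<Suc m. cnj (g' s p) * g' s q)" if p: "p \<in> ?J" and q: "q \<in> ?J" for p q
  proof (cases "d = 0")
    case True
    have c0: "C i i = 0" using True creal c_def by simp
    have row: "C i x = 0" if "x \<in> ?J" for x using psd_zero_row[OF fJ insert.prems _ that c0] by simp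
    have col: "C x i = 0" if "x \<in> ?J" for x using herm[OF that, of i] row[OF that] by simp
    have r0: "r = (\<lambda>q. 0)" using True by (simp add: r_def)
    show ?thesis
    proof (cases "p = i \<or> q = i")
      case True
      show ?thesis unfolding split low using row col p q True by (auto simp: r0)
    next
      case False
      have pI: "p \<in> I" "q \<in> I" using p q False by auto
      show ?thesis unfolding split low using g pI False row col by (simp add: r0 C'_def)
    qed
  next
    case False
    then have dpos: "d > 0" using dge by simp
    have sq: "complex_of_real (sqrt d) * complex_of_real (sqrt d) = c"
      using dge creal by (simp flip: of_real_mult)
    have rr: "cnj (r p) * r q = C p i * C i q / c"
    proof -
      have "cnj (r p) * r q = cnj (C i p) * C i q / (complex_of_real (sqrt d) * complex_of_real (sqrt d))"
        by (simp add: r_def)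
      also have "cnj (C i p) = C p i" using herm[OF p, of i] by simp
      finally show ?thesis by (simp add: sq)
    qed
    have cnz: "c \<noteq> 0" using creal dpos by simp
    show ?thesis
    proof (cases "p = i \<or> q = i")
      case True
      show ?thesis unfolding split low rr using cnz True by (auto simp: c_def)
    next
      case False
      have pI: "p \<in> I" "q \<in> I" using p q False by auto
      have "C' p q = (\<Sum>s<m. cnj (g s p) * g s q)" using g pI by blast
      then show ?thesis unfolding split low rr using False by (simp add: C'_def algebra_simps)
    qed
  qed
  then show ?case by blast
qed


definition kraus :: "nat set \<Rightarrow> ('a \<Rightarrow> nat \<Rightarrow> 'x \<Rightarrow> complex) \<Rightarrow> ('x::finite \<Rightarrow> 'x \<Rightarrow> complex) \<Rightarrow> ('a \<Rightarrow> 'a \<Rightarrow> complex)" where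
  "kraus S u M = (\<lambda>a a'. \<Sum>x\<in>UNIV. \<Sum>x'\<in>UNIV. M x x' * (\<Sum>s\<in>S. cnj (u a s x) * u a' s x'))"

lemma sum_pair: "(\<Sum>p\<in>A \<times> B. g p) = (\<Sum>a\<in>A. \<Sum>b\<in>B. g (a, b))"
  by (simp add: sum.cartesian_product)

lemma sum_sum_delta:
  "(\<Sum>x\<in>(UNIV::'x::finite set). \<Sum>x'\<in>(UNIV::'y::finite set). (if x = a \<and> x' = b then 1 else 0) * f x x') = (f a b :: complex)"
proof -
  have "\<And>x x'. (if x = a \<and> x' = b then 1 else 0) * f x x' = (if x = a then (if x' = b then f x x' else 0) else 0)"
    by simp
  moreover have "\<And>x. (\<Sum>x'\<in>(UNIV::'y set). if x = a then (if x' = b then f x x' else 0) else 0) = (if x = a then f x b else 0)"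
    by (case_tac "x = a") (simp_all add: sum.delta')
  ultimately show ?thesis by (simp add: sum.delta')
qed

lemma kraus_unit: "kraus S u (matunit x x') a a' = (\<Sum>s\<in>S. cnj (u a s x) * u a' s x')"
  unfolding kraus_def matunit_def by (rule sum_sum_delta)

lemma kraus_lin: "lin_map (kraus S u)"
  unfolding lin_map_def kraus_def
  by (auto simp: algebra_simps sum.distrib sum_distrib_left)

lemma kraus_tp:
  fixes u :: "'a::finite \<Rightarrow> nat \<Rightarrow> 'x::finite \<Rightarrow> complex"
  assumes "isometry_on S u"
  shows "trace_pres (kraus S u)"
  unfolding trace_pres_def
proof
  fix M :: "'x \<Rightarrow> 'x \<Rightarrow> complex"
  have "(\<Sum>a\<in>UNIV. kraus S u M a a) = (\<Sum>x\<in>UNIV. \<Sum>x'\<in>UNIV. M x x' * (\<Sum>a\<in>UNIV. \<Sum>s\<in>S. cnj (u a s x) * u a s x'))"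
    unfolding kraus_def by (simp add: sum_distrib_left sum.swap[where A = "UNIV::'a set"])
  also have "\<dots> = (\<Sum>x\<in>UNIV. \<Sum>x'\<in>UNIV. M x x' * (if x = x' then 1 else 0))"
    using assms unfolding isometry_on_def by simp
  also have "\<dots> = (\<Sum>x\<in>UNIV. M x x)" by (simp add: if_distrib cong: if_cong)
  finally show "(\<Sum>a\<in>UNIV. kraus S u M a a) = (\<Sum>x\<in>UNIV. M x x)" .
qed


lemma kraus_cp_eq:
  fixes u :: "'a::finite \<Rightarrow> nat \<Rightarrow> 'x::finite \<Rightarrow> complex"
  assumes "finite S"
  shows "(\<Sum>i\<in>UNIV\<times>{..<n}. \<Sum>j\<in>UNIV\<times>{..<n}. cnj (v i) * ampl (kraus S u) M i j * v j) =
     (\<Sum>s\<in>S. \<Sum>i\<in>UNIV\<times>{..<n}. \<Sum>j\<in>UNIV\<times>{..<n}. cnj ((\<lambda>(x,k). \<Sum>a\<in>UNIV. u a s x * v (a,k)) i) * M i j * (\<lambda>(x,k). \<Sum>a\<in>UNIV. u a s x * v (a,k)) j)"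
  apply (simp add: sum_pair ampl_def kraus_def cnj_sum sum_distrib_left sum_distrib_right)
  apply (simp only: sum.cartesian_product)
  apply (rule sum.reindex_bij_witness[where j = "\<lambda>(a,k,a',k',x,x',s). (s,x,k,x',k',a',a)"
          and i = "\<lambda>(s,x,k,x',k',a',a). (a,k,a',k',x,x',s)"])
  apply (auto simp: mult_ac)
  done

lemma kraus_cp:
  fixes u :: "'a::finite \<Rightarrow> nat \<Rightarrow> 'x::finite \<Rightarrow> complex"
  assumes "finite S"
  shows "compl_pos (kraus S u)"
  unfolding compl_pos_def
proof (intro allI impI)
  fix n :: nat and M :: "'x \<times> nat \<Rightarrow> 'x \<times> nat \<Rightarrow> complex"
  assume M: "psd_on (UNIV \<times> {..<n}) M"
  show "psd_on (UNIV \<times> {..<n}) (ampl (kraus S u) M)"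
    unfolding psd_on_def
  proof
    fix v :: "'a \<times> nat \<Rightarrow> complex"
    note eq = kraus_cp_eq[OF assms, where n=n and v=v and u=u and M=M]
    show "(\<Sum>i\<in>UNIV\<times>{..<n}. \<Sum>j\<in>UNIV\<times>{..<n}. cnj (v i) * ampl (kraus S u) M i j * v j) \<in> \<real> \<and>
       0 \<le> Re (\<Sum>i\<in>UNIV\<times>{..<n}. \<Sum>j\<in>UNIV\<times>{..<n}. cnj (v i) * ampl (kraus S u) M i j * v j)"
      unfolding eq
      apply (rule conjI)
       apply (rule sum_in_Reals)
       apply (rule psd_qf(1)[OF M])
      apply (subst Re_sum)
      apply (rule sum_nonneg)
      apply (rule psd_qf(2)[OF M])
      done
  qed
qed

lemma kraus_channel:
  fixes u :: "'a::finite \<Rightarrow> nat \<Rightarrow> 'x::finite \<Rightarrow> complex"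
  assumes "finite S" "isometry_on S u"
  shows "quantum_channel (kraus S u)"
  unfolding quantum_channel_def using kraus_lin kraus_tp[OF assms(2)] kraus_cp[OF assms(1)] by blast


lemma lin_add: "lin_map \<Phi> \<Longrightarrow> \<Phi> (\<lambda>i j. M i j + N i j) = (\<lambda>i j. \<Phi> M i j + \<Phi> N i j)"
  unfolding lin_map_def by blast

lemma lin_scal: "lin_map \<Phi> \<Longrightarrow> \<Phi> (\<lambda>i j. c * M i j) = (\<lambda>i j. c * \<Phi> M i j)"
  unfolding lin_map_def by blast

lemma lin_zero:
  assumes "lin_map \<Phi>"
  shows "\<Phi> (\<lambda>i j. 0) = (\<lambda>a a'. 0)"
proof -
  have "\<Phi> (\<lambda>i j. 0 * (\<lambda>i j. 0::complex) i j) = (\<lambda>a a'. 0 * \<Phi> (\<lambda>i j. 0) a a')"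
    by (rule lin_scal[OF assms])
  then show ?thesis by simp
qed

lemma lin_sum:
  assumes "lin_map \<Phi>" "finite F"
  shows "\<Phi> (\<lambda>i j. \<Sum>k\<in>F. f k i j) = (\<lambda>a a'. \<Sum>k\<in>F. \<Phi> (f k) a a')"
  using assms(2)
proof (induction F rule: finite_induct)
  case empty
  then show ?case using lin_zero[OF assms(1)] by simp
next
  case (insert k F)
  have "\<Phi> (\<lambda>i j. \<Sum>k\<in>insert k F. f k i j) = \<Phi> (\<lambda>i j. f k i j + (\<Sum>k\<in>F. f k i j))"
    using insert.hyps by simp
  also have "\<dots> = (\<lambda>a a'. \<Phi> (\<lambda>i j. f k i j) a a' + \<Phi> (\<lambda>i j. \<Sum>k\<in>F. f k i j) a a')"
    by (rule lin_add[OF assms(1), of "f k" "\<lambda>i j. \<Sum>k\<in>F. f k i j", simplified])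
  finally show ?case using insert by simp
qed

lemma lin_expand:
  fixes \<Phi> :: "('x::finite \<Rightarrow> 'x \<Rightarrow> complex) \<Rightarrow> ('a \<Rightarrow> 'a \<Rightarrow> complex)"
  assumes "lin_map \<Phi>"
  shows "\<Phi> M = (\<lambda>a a'. \<Sum>x\<in>UNIV. \<Sum>x'\<in>UNIV. M x x' * \<Phi> (matunit x x') a a')"
proof -
  have M: "M = (\<lambda>i j. \<Sum>p\<in>UNIV. M (fst p) (snd p) * matunit (fst p) (snd p) i j)"
  proof (intro ext)
    fix i j
    have "(\<Sum>p\<in>UNIV. M (fst p) (snd p) * matunit (fst p) (snd p) i j)
        = (\<Sum>x\<in>UNIV. \<Sum>x'\<in>UNIV. (if x = i \<and> x' = j then 1 else 0) * M x x')"
      unfolding UNIV_Times_UNIV[symmetric] sum_pair by (simp add: matunit_def mult.commute eq_commute)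
    also have "\<dots> = M i j" by (rule sum_sum_delta)
    finally show "M i j = (\<Sum>p\<in>UNIV. M (fst p) (snd p) * matunit (fst p) (snd p) i j)" by simp
  qed
  have sc: "\<Phi> (\<lambda>i j. M (fst p) (snd p) * matunit (fst p) (snd p) i j)
        = (\<lambda>a a'. M (fst p) (snd p) * \<Phi> (matunit (fst p) (snd p)) a a')" for p
    using lin_scal[OF assms, of "M (fst p) (snd p)" "matunit (fst p) (snd p)"] by simp
  have "\<Phi> M = (\<lambda>a a'. \<Sum>p\<in>UNIV. M (fst p) (snd p) * \<Phi> (matunit (fst p) (snd p)) a a')"
    by (subst M) (simp add: lin_sum[OF assms] sc)
  then show ?thesis
    unfolding UNIV_Times_UNIV[symmetric] sum_pair by simp
qed


lemma sum_if_const: "(\<Sum>k\<in>A. if P then h k else 0) = (if P then sum h A else 0)"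
  by (cases P) simp_all

lemma choi_psd:
  fixes \<Phi> :: "('x::finite \<Rightarrow> 'x \<Rightarrow> complex) \<Rightarrow> ('a::finite \<Rightarrow> 'a \<Rightarrow> complex)"
  assumes "compl_pos \<Phi>"
  shows "psd_on UNIV (\<lambda>(a,x) (a',x'). \<Phi> (matunit x x') a a')"
proof -
  define n where "n = card (UNIV::'x set)"
  obtain f where f: "bij_betw f (UNIV::'x set) {..<n}"
    using ex_bij_betw_finite_nat[of "UNIV::'x set"] by (auto simp: n_def lessThan_atLeast0)
  have finj: "\<And>x y. f x = f y \<Longrightarrow> x = y" using f unfolding bij_betw_def inj_on_def by blast
  have fn: "\<And>x. f x < n" using f unfolding bij_betw_def by auto
  define M0 :: "'x \<times> nat \<Rightarrow> 'x \<times> nat \<Rightarrow> complex" where "M0 = (\<lambda>(x, k) (x', k'). if k = f x then (if k' = f x' then (1::complex) else 0) else 0)"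
  have M0psd: "psd_on (UNIV\<times>{..<n}) M0"
    unfolding psd_on_def
  proof
    fix v :: "'x\<times>nat \<Rightarrow> complex"
    define T where "T = (\<Sum>x\<in>UNIV. v (x, f x))"
    have pw: "cnj (v (x,k)) * M0 (x,k) (x',k') * v (x',k') =
        (if k = f x then (if k' = f x' then cnj (v (x, f x)) * v (x', f x') else 0) else 0)" for x k x' k'
      by (simp add: M0_def)
    have "(\<Sum>i\<in>UNIV\<times>{..<n}. \<Sum>j\<in>UNIV\<times>{..<n}. cnj (v i) * M0 i j * v j) = cnj T * T"
    proof -
      have "(\<Sum>i\<in>UNIV\<times>{..<n}. \<Sum>j\<in>UNIV\<times>{..<n}. cnj (v i) * M0 i j * v j)
         = (\<Sum>a\<in>UNIV. \<Sum>aa\<in>UNIV. cnj (v (a, f a)) * v (aa, f aa))"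
        unfolding sum_pair pw by (simp add: sum_if_const sum.delta fn)
      also have "\<dots> = cnj T * T" unfolding T_def cnj_sum sum_product ..
      finally show ?thesis .
    qed
    also have "cnj T * T = complex_of_real ((cmod T)^2)"
      by (simp add: complex_norm_square[symmetric] mult.commute)
    finally show "(\<Sum>i\<in>UNIV\<times>{..<n}. \<Sum>j\<in>UNIV\<times>{..<n}. cnj (v i) * M0 i j * v j) \<in> \<real> \<and>
        0 \<le> Re (\<Sum>i\<in>UNIV\<times>{..<n}. \<Sum>j\<in>UNIV\<times>{..<n}. cnj (v i) * M0 i j * v j)" by simp
  qed
  have ampl_psd: "psd_on (UNIV\<times>{..<n}) (ampl \<Phi> M0)"
    using assms M0psd unfolding compl_pos_def by blast
  have key: "ampl \<Phi> M0 (a, f x) (a', f x') = \<Phi> (matunit x x') a a'" for a x a' x'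
  proof -
    have "(\<lambda>z z'. M0 (z, f x) (z', f x')) = matunit x x'"
      by (auto simp: M0_def matunit_def finj intro!: ext)
    then show ?thesis by (simp add: ampl_def)
  qed
  define h where "h = map_prod (id::'a \<Rightarrow> 'a) f"
  have hbij: "bij_betw h UNIV (UNIV\<times>{..<n})"
    unfolding h_def using bij_betw_map_prod[OF bij_betw_id[of "UNIV::'a set"] f] by simp
  show ?thesis
    unfolding psd_on_def
  proof
    fix v :: "'a\<times>'x \<Rightarrow> complex"
    define v' where "v' = (\<lambda>(a, k). v (a, inv_into UNIV f k))"
    have vh: "v' (h p) = v p" for p
      using finj by (cases p) (simp add: v'_def h_def inv_into_f_f inj_def)
    have ah: "ampl \<Phi> M0 (h p) (h q) = (\<lambda>(a,x) (a',x'). \<Phi> (matunit x x') a a') p q" for p q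
      by (cases p, cases q) (simp add: h_def key)
    have "(\<Sum>i\<in>UNIV\<times>{..<n}. \<Sum>j\<in>UNIV\<times>{..<n}. cnj (v' i) * ampl \<Phi> M0 i j * v' j)
       = (\<Sum>i\<in>UNIV. \<Sum>j\<in>UNIV. cnj (v' (h i)) * ampl \<Phi> M0 (h i) (h j) * v' (h j))"
      by (simp add: sum.reindex_bij_betw[OF hbij, symmetric])
    also have "\<dots> = (\<Sum>i\<in>UNIV. \<Sum>j\<in>UNIV. cnj (v i) * (\<lambda>(a,x) (a',x'). \<Phi> (matunit x x') a a') i j * v j)"
      by (simp only: vh ah)
    finally show "(\<Sum>i\<in>UNIV. \<Sum>j\<in>UNIV. cnj (v i) * (\<lambda>(a,x) (a',x'). \<Phi> (matunit x x') a a') i j * v j) \<in> \<real> \<and>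
        0 \<le> Re (\<Sum>i\<in>UNIV. \<Sum>j\<in>UNIV. cnj (v i) * (\<lambda>(a,x) (a',x'). \<Phi> (matunit x x') a a') i j * v j)"
      using psd_qf[OF ampl_psd, of v'] by simp
  qed
qed


lemma channel_kraus:
  fixes \<Phi> :: "('x::finite \<Rightarrow> 'x \<Rightarrow> complex) \<Rightarrow> ('a::finite \<Rightarrow> 'a \<Rightarrow> complex)"
  assumes "quantum_channel \<Phi>"
  shows "\<exists>(m::nat) u. isometry_on {..<m} u \<and> \<Phi> = kraus {..<m} u"
proof -
  have lin: "lin_map \<Phi>" and cp: "compl_pos \<Phi>" and tp: "trace_pres \<Phi>"
    using assms unfolding quantum_channel_def by auto
  obtain m :: nat and g where g: "\<forall>p\<in>UNIV. \<forall>q\<in>UNIV. (\<lambda>(a,x) (a',x'). \<Phi> (matunit x x') a a') p q = (\<Sum>s<m. cnj (g s p) * g s q)"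
    using gram[OF finite_UNIV choi_psd[OF cp]] by blast
  define u where "u = (\<lambda>a s x. g s (a,x))"
  have unit: "\<Phi> (matunit x x') a a' = (\<Sum>s<m. cnj (u a s x) * u a' s x')" for x x' a a'
    using g by (auto simp: u_def)
  have eq: "\<Phi> = kraus {..<m} u"
  proof
    fix M
    show "\<Phi> M = kraus {..<m} u M"
      unfolding lin_expand[OF lin, of M] kraus_def unit ..
  qed
  have iso: "isometry_on {..<m} u"
    unfolding isometry_on_def
  proof (intro allI)
    fix x x' :: 'x
    have "(\<Sum>a\<in>UNIV. \<Sum>s\<in>{..<m}. cnj (u a s x) * u a s x') = (\<Sum>a\<in>UNIV. \<Phi> (matunit x x') a a)"
      by (simp add: unit)
    also have "\<dots> = (\<Sum>z\<in>UNIV. matunit x x' z z)" using tp unfolding trace_pres_def by blast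
    also have "\<dots> = (if x = x' then 1 else 0)"
      by (cases "x = x'") (auto simp: matunit_def intro!: sum.neutral)
    finally show "(\<Sum>a\<in>UNIV. \<Sum>s\<in>{..<m}. cnj (u a s x) * u a s x') = (if x = x' then 1 else 0)" .
  qed
  show ?thesis using iso eq by blast
qed



lemma dsum_K_Sigma: "dsum_K n S T = Sigma {..<n} (\<lambda>i. S i \<times> T i)"
  unfolding dsum_K_def by auto

lemma dsum_W_app: "dsum_W u v (a,b) (x,y) (i,st) j = (if i = j then u i a (fst st) x * v i b (snd st) y else 0)"
  by (cases st) (simp add: dsum_W_def)

lemma inner_k:
  fixes u :: "nat \<Rightarrow> 'a \<Rightarrow> nat \<Rightarrow> 'x \<Rightarrow> complex" and v :: "nat \<Rightarrow> 'b \<Rightarrow> nat \<Rightarrow> 'y \<Rightarrow> complex"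
  assumes fin: "\<forall>i<n. finite (S i) \<and> finite (T i)" and hn: "h < n" and hn': "h' < n"
  shows "(\<Sum>k\<in>dsum_K n S T. cnj (dsum_W u v (a,b) (x,y) k h') * dsum_W u v (a',b') (x',y') k h)
     = (if h' = h then (\<Sum>s\<in>S h. cnj (u h a s x) * u h a' s x') * (\<Sum>t\<in>T h. cnj (v h b t y) * v h b' t y') else 0)"
proof -
  have "(\<Sum>k\<in>dsum_K n S T. cnj (dsum_W u v (a,b) (x,y) k h') * dsum_W u v (a',b') (x',y') k h)
      = (\<Sum>i<n. \<Sum>st\<in>S i \<times> T i. cnj (dsum_W u v (a,b) (x,y) (i,st) h') * dsum_W u v (a',b') (x',y') (i,st) h)"
    unfolding dsum_K_Sigma using fin by (subst sum.Sigma) auto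
  also have "\<dots> = (\<Sum>i<n. if i = h then (if h' = h then (\<Sum>st\<in>S i \<times> T i. cnj (u i a (fst st) x * v i b (snd st) y) * (u i a' (fst st) x' * v i b' (snd st) y')) else 0) else 0)"
    by (rule sum.cong) (auto simp: dsum_W_app)
  also have "\<dots> = (if h' = h then (\<Sum>st\<in>S h \<times> T h. cnj (u h a (fst st) x * v h b (snd st) y) * (u h a' (fst st) x' * v h b' (snd st) y')) else 0)"
    using hn by (simp add: sum.delta')
  also have "(\<Sum>st\<in>S h \<times> T h. cnj (u h a (fst st) x * v h b (snd st) y) * (u h a' (fst st) x' * v h b' (snd st) y'))
     = (\<Sum>s\<in>S h. cnj (u h a s x) * u h a' s x') * (\<Sum>t\<in>T h. cnj (v h b t y) * v h b' t y')"
    unfolding sum_pair sum_product by (simp add: mult_ac)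
  finally show ?thesis .
qed


lemma gamma_eq:
  fixes u :: "nat \<Rightarrow> 'a::finite \<Rightarrow> nat \<Rightarrow> 'x::finite \<Rightarrow> complex" and v :: "nat \<Rightarrow> 'b::finite \<Rightarrow> nat \<Rightarrow> 'y::finite \<Rightarrow> complex"
  assumes fin: "\<forall>i<n. finite (S i) \<and> finite (T i)"
  shows "gammaW (dsum_K n S T) {..<n} (dsum_W u v) \<rho>
       = (\<lambda>M c c'. \<Sum>i<n. \<rho> i i * map_tensor (kraus (S i) (u i)) (kraus (T i) (v i)) M c c')"
proof (intro ext)
  fix M :: "'x \<times> 'y \<Rightarrow> 'x \<times> 'y \<Rightarrow> complex" and c c' :: "'a \<times> 'b"
  obtain a b where c: "c = (a,b)" by (cases c)
  obtain a' b' where c': "c' = (a',b')" by (cases c')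
  define K1 where "K1 = (\<lambda>h x x'. \<Sum>s\<in>S h. cnj (u h a s x) * u h a' s x')"
  define K2 where "K2 = (\<lambda>h y y'. \<Sum>t\<in>T h. cnj (v h b t y) * v h b' t y')"
  have inner: "(\<Sum>h<n. \<Sum>h'<n. \<rho> h h' * (\<Sum>k\<in>dsum_K n S T. cnj (dsum_W u v (a,b) (x,y) k h') * dsum_W u v (a',b') (x',y') k h))
      = (\<Sum>h<n. \<rho> h h * (K1 h x x' * K2 h y y'))" for x y x' y'
  proof (rule sum.cong[OF refl])
    fix h assume "h \<in> {..<n}"
    then have hn: "h < n" by simp
    have "(\<Sum>h'<n. \<rho> h h' * (\<Sum>k\<in>dsum_K n S T. cnj (dsum_W u v (a,b) (x,y) k h') * dsum_W u v (a',b') (x',y') k h))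
       = (\<Sum>h'<n. if h' = h then \<rho> h h' * (K1 h x x' * K2 h y y') else 0)"
      by (rule sum.cong[OF refl]) (simp add: inner_k[OF fin hn] K1_def K2_def)
    also have "\<dots> = \<rho> h h * (K1 h x x' * K2 h y y')" using hn by (simp add: sum.delta')
    finally show "(\<Sum>h'<n. \<rho> h h' * (\<Sum>k\<in>dsum_K n S T. cnj (dsum_W u v (a,b) (x,y) k h') * dsum_W u v (a',b') (x',y') k h))
       = \<rho> h h * (K1 h x x' * K2 h y y')" .
  qed
  have lhs: "gammaW (dsum_K n S T) {..<n} (dsum_W u v) \<rho> M c c'
     = (\<Sum>x\<in>UNIV. \<Sum>y\<in>UNIV. \<Sum>x'\<in>UNIV. \<Sum>y'\<in>UNIV. M (x,y) (x',y') * (\<Sum>h<n. \<rho> h h * (K1 h x x' * K2 h y y')))"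
    unfolding gammaW_def c c' UNIV_Times_UNIV[symmetric] sum_pair by (simp only: inner)
  have rhs: "(\<Sum>i<n. \<rho> i i * map_tensor (kraus (S i) (u i)) (kraus (T i) (v i)) M c c')
     = (\<Sum>i<n. \<rho> i i * (\<Sum>x\<in>UNIV. \<Sum>x'\<in>UNIV. \<Sum>y\<in>UNIV. \<Sum>y'\<in>UNIV. M (x,y) (x',y') * K1 i x x' * K2 i y y'))"
    by (simp add: map_tensor_def kraus_unit K1_def K2_def c c')
  show "gammaW (dsum_K n S T) {..<n} (dsum_W u v) \<rho> M c c'
     = (\<Sum>i<n. \<rho> i i * map_tensor (kraus (S i) (u i)) (kraus (T i) (v i)) M c c')"
    unfolding lhs rhs
    apply (simp only: sum_distrib_left sum_distrib_right)
    apply (simp only: sum.cartesian_product)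
    apply (rule sum.reindex_bij_witness[where j = "\<lambda>(x,y,x',y',h). (h,x,x',y,y')"
          and i = "\<lambda>(h,x,x',y,y'). (x,y,x',y',h)"])
    apply (auto simp: mult_ac)
    done
qed



lemma real_of_Re: "z \<in> \<real> \<Longrightarrow> complex_of_real (Re z) = z"
  by (simp add: complex_is_Real_iff complex_eq_iff)

lemma diag_density:
  fixes n :: nat and w :: "nat \<Rightarrow> real"
  assumes "\<forall>i<n. 0 \<le> w i" "(\<Sum>i<n. w i) = (1::real)"
  shows "density_on {..<n} (\<lambda>h h'. if h = h' then complex_of_real (w h) else 0)"
  unfolding density_on_def psd_on_def
proof (intro conjI allI)
  fix v :: "nat \<Rightarrow> complex"
  have "(\<Sum>i<n. \<Sum>j<n. cnj (v i) * (if i = j then complex_of_real (w i) else 0) * v j)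
      = (\<Sum>i<n. complex_of_real (w i * (cmod (v i))^2))"
  proof (rule sum.cong[OF refl])
    fix i assume "i \<in> {..<n}"
    have "(\<Sum>j<n. cnj (v i) * (if i = j then complex_of_real (w i) else 0) * v j)
        = (\<Sum>j<n. if i = j then cnj (v i) * complex_of_real (w i) * v j else 0)"
      by (rule sum.cong) auto
    also have "\<dots> = cnj (v i) * complex_of_real (w i) * v i" using \<open>i \<in> {..<n}\<close> by (simp add: sum.delta)
    also have "\<dots> = complex_of_real (w i * (cmod (v i))^2)"
      by (simp add: complex_norm_square[symmetric] mult_ac)
    finally show "(\<Sum>j<n. cnj (v i) * (if i = j then complex_of_real (w i) else 0) * v j)
        = complex_of_real (w i * (cmod (v i))^2)" .
  qed
  then show "(\<Sum>i<n. \<Sum>j<n. cnj (v i) * (if i = j then complex_of_real (w i) else 0) * v j) \<in> \<real>"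
     "0 \<le> Re (\<Sum>i<n. \<Sum>j<n. cnj (v i) * (if i = j then complex_of_real (w i) else 0) * v j)"
  proof -
    assume eq: "(\<Sum>i<n. \<Sum>j<n. cnj (v i) * (if i = j then complex_of_real (w i) else 0) * v j)
      = (\<Sum>i<n. complex_of_real (w i * (cmod (v i))^2))"
    show "(\<Sum>i<n. \<Sum>j<n. cnj (v i) * (if i = j then complex_of_real (w i) else 0) * v j) \<in> \<real>"
      unfolding eq by (rule sum_in_Reals) simp
    have "0 \<le> (\<Sum>i<n. w i * (cmod (v i))^2)"
      using assms(1) by (intro sum_nonneg) simp
    then show "0 \<le> Re (\<Sum>i<n. \<Sum>j<n. cnj (v i) * (if i = j then complex_of_real (w i) else 0) * v j)"
      unfolding eq Re_sum by simp
  qed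
next
  have "(\<Sum>h<n. complex_of_real (w h)) = complex_of_real (\<Sum>h<n. w h)" by simp
  then show "(\<Sum>h<n. if h = h then complex_of_real (w h) else 0) = 1" using assms(2) by simp
qed

theorem proposition5p1:
  shows "(QC_Rloc :: (('x::finite \<times> 'y::finite \<Rightarrow> 'x \<times> 'y \<Rightarrow> complex)
           \<Rightarrow> ('a::finite \<times> 'b::finite \<Rightarrow> 'a \<times> 'b \<Rightarrow> complex)) set) = Q_loc"
proof (intro equalityI subsetI)
  fix \<Gamma> :: "('x \<times> 'y \<Rightarrow> 'x \<times> 'y \<Rightarrow> complex) \<Rightarrow> ('a \<times> 'b \<Rightarrow> 'a \<times> 'b \<Rightarrow> complex)"
  assume "\<Gamma> \<in> QC_Rloc"
  then obtain n S T u v \<rho> where G: "\<Gamma> = gammaW (dsum_K n S T) {..<n} (dsum_W u v) \<rho>"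
    and conds: "\<forall>i<n. finite (S i) \<and> finite (T i) \<and> isometry_on (S i) (u i) \<and> isometry_on (T i) (v i)"
    and dens: "density_on {..<n} \<rho>"
    using \<open>\<Gamma> \<in> QC_Rloc\<close> unfolding QC_Rloc_def mem_Collect_eq
    apply (elim exE conjE)
    apply (rule that)
      apply assumption+
    done
  have fin: "\<forall>i<n. finite (S i) \<and> finite (T i)" using conds by blast
  have psd: "psd_on {..<n} \<rho>" and tr: "(\<Sum>h<n. \<rho> h h) = 1" using dens unfolding density_on_def by auto
  define w where "w = (\<lambda>i. Re (\<rho> i i))"
  have rw: "\<rho> i i = complex_of_real (w i)" if "i < n" for i
    using psd_diag(1)[OF finite_lessThan psd, of i] that by (simp add: w_def real_of_Re)
  have "(\<forall>i<n. 0 \<le> w i \<and> quantum_channel (kraus (S i) (u i)) \<and> quantum_channel (kraus (T i) (v i))) \<and>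
      (\<Sum>i<n. w i) = 1 \<and>
      \<Gamma> = (\<lambda>M c c'. \<Sum>i<n. complex_of_real (w i) * map_tensor (kraus (S i) (u i)) (kraus (T i) (v i)) M c c')"
  proof (intro conjI allI impI)
    fix i assume i: "i < n"
    show "0 \<le> w i" using psd_diag(2)[OF finite_lessThan psd, of i] i by (simp add: w_def)
    show "quantum_channel (kraus (S i) (u i))" using conds i by (simp add: kraus_channel)
    show "quantum_channel (kraus (T i) (v i))" using conds i by (simp add: kraus_channel)
  next
    show "(\<Sum>i<n. w i) = 1" using arg_cong[OF tr, of Re] by (simp add: w_def)
  next
    show "\<Gamma> = (\<lambda>M c c'. \<Sum>i<n. complex_of_real (w i) * map_tensor (kraus (S i) (u i)) (kraus (T i) (v i)) M c c')"
      unfolding G gamma_eq[OF fin]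
    proof (intro ext)
      fix M c c'
      show "(\<Sum>i<n. \<rho> i i * map_tensor (kraus (S i) (u i)) (kraus (T i) (v i)) M c c')
          = (\<Sum>i<n. complex_of_real (w i) * map_tensor (kraus (S i) (u i)) (kraus (T i) (v i)) M c c')"
        by (rule sum.cong) (simp_all add: rw)
    qed
  qed
  then show "\<Gamma> \<in> Q_loc" unfolding Q_loc_def mem_Collect_eq by (intro exI) assumption
next
  fix \<Gamma> :: "('x \<times> 'y \<Rightarrow> 'x \<times> 'y \<Rightarrow> complex) \<Rightarrow> ('a \<times> 'b \<Rightarrow> 'a \<times> 'b \<Rightarrow> complex)"
  assume "\<Gamma> \<in> Q_loc"
  then obtain n :: nat and w :: "nat \<Rightarrow> real" and \<Phi> :: "nat \<Rightarrow> ('x \<Rightarrow> 'x \<Rightarrow> complex) \<Rightarrow> ('a \<Rightarrow> 'a \<Rightarrow> complex)"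
    and \<Psi> :: "nat \<Rightarrow> ('y \<Rightarrow> 'y \<Rightarrow> complex) \<Rightarrow> ('b \<Rightarrow> 'b \<Rightarrow> complex)"
    where ch: "\<forall>i<n. 0 \<le> w i \<and> quantum_channel (\<Phi> i) \<and> quantum_channel (\<Psi> i)"
      and ws: "(\<Sum>i<n. w i) = 1"
      and G: "\<Gamma> = (\<lambda>M c c'. \<Sum>i<n. complex_of_real (w i) * map_tensor (\<Phi> i) (\<Psi> i) M c c')"
    using \<open>\<Gamma> \<in> Q_loc\<close> unfolding Q_loc_def mem_Collect_eq
    apply (elim exE conjE)
    apply (rule that)
      apply assumption+
    done
  have "\<forall>i\<in>{..<n}. \<exists>p :: nat \<times> ('a \<Rightarrow> nat \<Rightarrow> 'x \<Rightarrow> complex). isometry_on {..<fst p} (snd p) \<and> \<Phi> i = kraus {..<fst p} (snd p)"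
  proof
    fix i assume "i \<in> {..<n}"
    then have "quantum_channel (\<Phi> i)" using ch by simp
    then obtain m u where mu: "isometry_on {..<m} u \<and> \<Phi> i = kraus {..<m} u" using channel_kraus by blast
    show "\<exists>p :: nat \<times> ('a \<Rightarrow> nat \<Rightarrow> 'x \<Rightarrow> complex). isometry_on {..<fst p} (snd p) \<and> \<Phi> i = kraus {..<fst p} (snd p)"
      using mu by (intro exI[of _ "(m,u)"]) simp
  qed
  then obtain F where F: "\<forall>i\<in>{..<n}. isometry_on {..<fst (F i)} (snd (F i)) \<and> \<Phi> i = kraus {..<fst (F i)} (snd (F i))"
    by (rule bchoice[elim_format]) blast
  have "\<forall>i\<in>{..<n}. \<exists>p :: nat \<times> ('b \<Rightarrow> nat \<Rightarrow> 'y \<Rightarrow> complex). isometry_on {..<fst p} (snd p) \<and> \<Psi> i = kraus {..<fst p} (snd p)"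
  proof
    fix i assume "i \<in> {..<n}"
    then have "quantum_channel (\<Psi> i)" using ch by simp
    then obtain m v where mv: "isometry_on {..<m} v \<and> \<Psi> i = kraus {..<m} v" using channel_kraus by blast
    show "\<exists>p :: nat \<times> ('b \<Rightarrow> nat \<Rightarrow> 'y \<Rightarrow> complex). isometry_on {..<fst p} (snd p) \<and> \<Psi> i = kraus {..<fst p} (snd p)"
      using mv by (intro exI[of _ "(m,v)"]) simp
  qed
  then obtain F' where F': "\<forall>i\<in>{..<n}. isometry_on {..<fst (F' i)} (snd (F' i)) \<and> \<Psi> i = kraus {..<fst (F' i)} (snd (F' i))"
    by (rule bchoice[elim_format]) blast
  define S where "S = (\<lambda>i. {..<fst (F i)})"
  define u where "u = (\<lambda>i. snd (F i))"
  define T where "T = (\<lambda>i. {..<fst (F' i)})"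
  define v where "v = (\<lambda>i. snd (F' i))"
  define \<rho> where "\<rho> = (\<lambda>h h'. if h = h' then complex_of_real (w h) else 0)"
  have conds: "\<forall>i<n. finite (S i) \<and> finite (T i) \<and> isometry_on (S i) (u i) \<and> isometry_on (T i) (v i)"
    using F F' by (simp add: S_def T_def u_def v_def)
  have fin: "\<forall>i<n. finite (S i) \<and> finite (T i)" using conds by blast
  have dens: "density_on {..<n} \<rho>" unfolding \<rho>_def using diag_density ch ws by blast
  have "\<Gamma> = gammaW (dsum_K n S T) {..<n} (dsum_W u v) \<rho>"
    unfolding G gamma_eq[OF fin]
  proof (intro ext)
    fix M c c'
    show "(\<Sum>i<n. complex_of_real (w i) * map_tensor (\<Phi> i) (\<Psi> i) M c c')
        = (\<Sum>i<n. \<rho> i i * map_tensor (kraus (S i) (u i)) (kraus (T i) (v i)) M c c')"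
    proof (rule sum.cong[OF refl])
      fix i assume "i \<in> {..<n}"
      then have "\<Phi> i = kraus (S i) (u i)" "\<Psi> i = kraus (T i) (v i)"
        using F F' by (simp_all add: S_def T_def u_def v_def)
      then show "complex_of_real (w i) * map_tensor (\<Phi> i) (\<Psi> i) M c c'
          = \<rho> i i * map_tensor (kraus (S i) (u i)) (kraus (T i) (v i)) M c c'"
        by (simp add: \<rho>_def)
    qed
  qed
  then show "\<Gamma> \<in> QC_Rloc" unfolding QC_Rloc_def mem_Collect_eq using conds dens
    by (intro exI conjI) assumption+
qed


end
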